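(* Let $E_1,E_2,E_3,H_1,H_2,H_3$ be logically independent events with $H_i\ne\emptyset$, let $(x_1,x_2,x_3)\in[0,1]^3$, and let $$\mathcal M=(x_1,x_2,x_3,T_L(x_1,x_2),T_L(x_1,x_3),T_L(x_2,x_3),T_L(x_1,x_2,x_3))$$ be a prevision assessment on $\mathcal F=\{\mathscr C_1,\mathscr C_2,\mathscr C_3,\mathscr C_{12},\mathscr C_{13},\mathscr C_{23},\mathscr C_{123}\}$, where $T_L(x_i,x_j)=\max\{x_i+x_j-1,0\}$ and $T_L(x_1,x_2,x_3)=\max\{x_1+x_2+x_3-2,0\}$. (i) If $x_1+x_2+x_3-2\ge0$, then $\mathcal M$ is coherent. (ii) If $x_1+x_2-1>0$, $x_1+x_3-1>0$, $x_2+x_3-1>0$ and $x_1+x_2+x_3-2<0$, then $\mathcal M$ is not coherent.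
   Context: Events are identified with their indicators; $\bar E$ is the negation of $E$. For $H\ne\emptyset$ the conditional event $E|H$ is true if $EH$ is true, false if $\bar EH$ is true, void if $\bar H$ is true; with $P(E|H)=x$ it is identified with the random quantity $EH+x\bar H$, and a conditional random quantity $X|H$ with prevision $\mu$ with $XH+\mu\bar H$. Coherence (de Finetti): an assessment $(\mu_1,\dots,\mu_m)$ on $\{X_1|H_1,\dots,X_m|H_m\}$ is coherent iff for all real stakes $s_i$ the gain $G=\sum_is_iH_i(X_i-\mu_i)$, restricted to $H_1\vee\dots\vee H_m$, satisfies $\min G\le0\le\max G$. Logical independence: all conjunctions of the listed events or their negations are nonempty. Notation: $\mathscr C_i=E_i|H_i$, $\mathscr C_{ij}=(E_i|H_i)\wedge(E_j|H_j)$, $\mathscr C_{123}=(E_1|H_1)\wedge(E_2|H_2)\wedge(E_3|H_3)$, with previsions $x_i,x_{ij},x_{123}$ in the order of $\mathcal F$. Conjunction of two: $\mathscr C_{ij}$ equals $1$ if $E_iH_iE_jH_j$ true, $0$ if $\bar E_iH_i\vee\bar E_jH_j$ true, $x_i$ if $\bar H_iE_jH_j$ true, $x_j$ if $\bar H_jE_iH_i$ true, $x_{ij}$ if $\bar H_i\bar H_j$ true. $\mathscr C_{123}$ equals $1$ if $E_1H_1E_2H_2E_3H_3$ true; $0$ if $\bar E_1H_1\vee\bar E_2H_2\vee\bar E_3H_3$ true; $x_1$, $x_2$, $x_3$ if respectively $\bar H_1E_2H_2E_3H_3$, $\bar H_2E_1H_1E_3H_3$, $\bar H_3E_1H_1E_2H_2$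 true; $x_{12}$, $x_{13}$, $x_{23}$ if respectively $\bar H_1\bar H_2E_3H_3$, $\bar H_1\bar H_3E_2H_2$, $\bar H_2\bar H_3E_1H_1$ true; $x_{123}$ if $\bar H_1\bar H_2\bar H_3$ true. *)

theory Defs
  imports Complex_Main "HOL-Library.Indicator_Function"
begin

text \<open>Sample space: the universe of type 'w; events are sets of states.
  A conditional random quantity X|K is a pair (X, K) where X is the value
  of the quantity on the states where the conditioning event K is true.\<close>

definition logically_independent :: "'w set list \<Rightarrow> bool" where
  "logically_independent As \<longleftrightarrow>
     (\<forall>b :: nat \<Rightarrow> bool. \<exists>w. \<forall>i < length As. (w \<in> As ! i) = b i)"

definition coherent :: "(('w \<Rightarrow> real) \<times> 'w set) list \<Rightarrow> real list \<Rightarrow> bool" where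
  "coherent F mu \<longleftrightarrow> length mu = length F \<and>
     (\<forall>s :: nat \<Rightarrow> real.
        let G = (\<lambda>w. \<Sum>k<length F. s k * indicator (snd (F ! k)) w * (fst (F ! k) w - mu ! k));
            U = \<Union> (snd ` set F)
        in (\<exists>w\<in>U. G w \<le> 0) \<and> (\<exists>w\<in>U. 0 \<le> G w))"

definition cond_event :: "'w set \<Rightarrow> 'w set \<Rightarrow> ('w \<Rightarrow> real) \<times> 'w set" where
  "cond_event E H = (indicator E, H)"

text \<open>Conjunction (E_i|H_i) and (E_j|H_j), given x_i = P(E_i|H_i), x_j = P(E_j|H_j),
  with conditioning event H_i or H_j.\<close>
definition conj2 :: "'w set \<Rightarrow> 'w set \<Rightarrow> 'w set \<Rightarrow> 'w set \<Rightarrow> real \<Rightarrow> real \<Rightarrow> ('w \<Rightarrow> real) \<times> 'w set" where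
  "conj2 Ei Hi Ej Hj xi xj =
     ((\<lambda>w. if w \<in> Ei \<inter> Hi \<inter> Ej \<inter> Hj then 1
           else if w \<in> (-Ei \<inter> Hi) \<union> (-Ej \<inter> Hj) then 0
           else if w \<notin> Hi \<and> w \<in> Ej \<inter> Hj then xi
           else if w \<notin> Hj \<and> w \<in> Ei \<inter> Hi then xj
           else 0),
      Hi \<union> Hj)"

text \<open>Conjunction of three conditional events, given the previsions
  x1,x2,x3 of the single events and x12,x13,x23 of the pairwise conjunctions;
  conditioning event H1 or H2 or H3.\<close>
definition conj3 :: "'w set \<Rightarrow> 'w set \<Rightarrow> 'w set \<Rightarrow> 'w set \<Rightarrow> 'w set \<Rightarrow> 'w set \<Rightarrow>
    real \<Rightarrow> real \<Rightarrow> real \<Rightarrow> real \<Rightarrow> real \<Rightarrow> real \<Rightarrow> ('w \<Rightarrow> real) \<times> 'w set" where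
  "conj3 E1 H1 E2 H2 E3 H3 x1 x2 x3 x12 x13 x23 =
     ((\<lambda>w. if w \<in> E1 \<inter> H1 \<inter> E2 \<inter> H2 \<inter> E3 \<inter> H3 then 1
           else if w \<in> (-E1 \<inter> H1) \<union> (-E2 \<inter> H2) \<union> (-E3 \<inter> H3) then 0
           else if w \<notin> H1 \<and> w \<in> E2 \<inter> H2 \<inter> E3 \<inter> H3 then x1
           else if w \<notin> H2 \<and> w \<in> E1 \<inter> H1 \<inter> E3 \<inter> H3 then x2
           else if w \<notin> H3 \<and> w \<in> E1 \<inter> H1 \<inter> E2 \<inter> H2 then x3
           else if w \<notin> H1 \<and> w \<notin> H2 \<and> w \<in> E3 \<inter> H3 then x12
           else if w \<notin> H1 \<and> w \<notin> H3 \<and> w \<in> E2 \<inter> H2 then x13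
           else if w \<notin> H2 \<and> w \<notin> H3 \<and> w \<in> E1 \<inter> H1 then x23
           else 0),
      H1 \<union> H2 \<union> H3)"

definition TL2 :: "real \<Rightarrow> real \<Rightarrow> real" where
  "TL2 a b = max (a + b - 1) 0"

definition TL3 :: "real \<Rightarrow> real \<Rightarrow> real \<Rightarrow> real" where
  "TL3 a b c = max (a + b + c - 2) 0"

definition assessM :: "real \<Rightarrow> real \<Rightarrow> real \<Rightarrow> real list" where
  "assessM x1 x2 x3 = [x1, x2, x3, TL2 x1 x2, TL2 x1 x3, TL2 x2 x3, TL3 x1 x2 x3]"

definition familyF :: "'w set \<Rightarrow> 'w set \<Rightarrow> 'w set \<Rightarrow> 'w set \<Rightarrow> 'w set \<Rightarrow> 'w set \<Rightarrow>
    real \<Rightarrow> real \<Rightarrow> real \<Rightarrow> (('w \<Rightarrow> real) \<times> 'w set) list" where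
  "familyF E1 E2 E3 H1 H2 H3 x1 x2 x3 =
     [cond_event E1 H1, cond_event E2 H2, cond_event E3 H3,
      conj2 E1 H1 E2 H2 x1 x2, conj2 E1 H1 E3 H3 x1 x3, conj2 E2 H2 E3 H3 x2 x3,
      conj3 E1 H1 E2 H2 E3 H3 x1 x2 x3 (TL2 x1 x2) (TL2 x1 x3) (TL2 x2 x3)]"

end

theory Submission
  imports Defs
begin

lemma sum7: "(\<Sum>k<7. f k) = f 0 + f 1 + f 2 + f 3 + f 4 + f 5 + (f (6::nat) :: real)"
  by (simp add: eval_nat_numeral)

definition gk :: "(('w \<Rightarrow> real) \<times> 'w set) \<Rightarrow> real \<Rightarrow> 'w \<Rightarrow> real" where
  "gk F m w = indicator (snd F) w * (fst F w - m)"

lemma G_expand: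
  "(\<Sum>k<length (familyF E1 E2 E3 H1 H2 H3 x1 x2 x3). s k * indicator (snd (familyF E1 E2 E3 H1 H2 H3 x1 x2 x3 ! k)) w *
         (fst (familyF E1 E2 E3 H1 H2 H3 x1 x2 x3 ! k) w - assessM x1 x2 x3 ! k))
   = s 0 * gk (cond_event E1 H1) x1 w + s 1 * gk (cond_event E2 H2) x2 w + s 2 * gk (cond_event E3 H3) x3 w
     + s 3 * gk (conj2 E1 H1 E2 H2 x1 x2) (TL2 x1 x2) w
     + s 4 * gk (conj2 E1 H1 E3 H3 x1 x3) (TL2 x1 x3) w
     + s 5 * gk (conj2 E2 H2 E3 H3 x2 x3) (TL2 x2 x3) w
     + s 6 * gk (conj3 E1 H1 E2 H2 E3 H3 x1 x2 x3 (TL2 x1 x2) (TL2 x1 x3) (TL2 x2 x3)) (TL3 x1 x2 x3) w"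
  apply (simp only: familyF_def length_Cons list.size add_0 numeral_2_eq_2)
  apply (simp add: eval_nat_numeral gk_def assessM_def mult.assoc)
  done

lemma U_eq: "\<Union> (snd ` set (familyF E1 E2 E3 H1 H2 H3 x1 x2 x3)) = H1 \<union> H2 \<union> H3"
  by (auto simp: familyF_def cond_event_def conj2_def conj3_def)

lemma Zpos:
  fixes x1 x2 x3 :: real
  assumes "w \<in> H1 \<union> H2 \<union> H3" "x1 \<in> {0..1}" "x2 \<in> {0..1}" "x3 \<in> {0..1}"
  shows "- gk (cond_event E1 H1) x1 w - gk (cond_event E2 H2) x2 w - gk (cond_event E3 H3) x3 w
     + gk (conj2 E1 H1 E2 H2 x1 x2) (x1+x2-1) w
     + gk (conj2 E1 H1 E3 H3 x1 x3) (x1+x3-1) w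
     + gk (conj2 E2 H2 E3 H3 x2 x3) (x2+x3-1) w
     - gk (conj3 E1 H1 E2 H2 E3 H3 x1 x2 x3 (x1+x2-1) (x1+x3-1) (x2+x3-1)) 0 w
    \<ge> 2 - x1 - x2 - x3"
  using assms
  apply (cases "w\<in>E1"; cases "w\<in>E2"; cases "w\<in>E3"; cases "w\<in>H1"; cases "w\<in>H2"; cases "w\<in>H3")
  apply (simp_all add: gk_def cond_event_def conj2_def conj3_def)
  done


lemma conv4:
  fixes p0 p1 p2 p3 a b c d :: real
  assumes "p0\<ge>0" "p1\<ge>0" "p2\<ge>0" "p3\<ge>0" "p0+p1+p2+p3=1" "p0*a+p1*b+p2*c+p3*d = 0"
  shows "a\<le>0 \<or> b\<le>0 \<or> c\<le>0 \<or> d\<le>0"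
proof (rule ccontr)
  assume "\<not> ?thesis"
  hence pos: "a>0" "b>0" "c>0" "d>0" by auto
  have "p0*a\<ge>0" "p1*b\<ge>0" "p2*c\<ge>0" "p3*d\<ge>0" using assms pos by auto
  hence "p0*a=0" "p1*b=0" "p2*c=0" "p3*d=0" using assms(6) by linarith+
  hence "p0=0" "p1=0" "p2=0" "p3=0" using pos by auto
  thus False using assms(5) by simp
qed

lemma conv4':
  fixes p0 p1 p2 p3 a b c d :: real
  assumes "p0\<ge>0" "p1\<ge>0" "p2\<ge>0" "p3\<ge>0" "p0+p1+p2+p3=1" "p0*a+p1*b+p2*c+p3*d = 0"
  shows "a\<ge>0 \<or> b\<ge>0 \<or> c\<ge>0 \<or> d\<ge>0"
proof -
  have "p0*(-a)+p1*(-b)+p2*(-c)+p3*(-d) = 0" using assms(6) by simp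
  from conv4[OF assms(1-5) this] show ?thesis by auto
qed

theorem theorem24:
  fixes E1 E2 E3 H1 H2 H3 :: "'w set" and x1 x2 x3 :: real
  assumes "logically_independent [E1, E2, E3, H1, H2, H3]"
    and "H1 \<noteq> {}" "H2 \<noteq> {}" "H3 \<noteq> {}"
    and "x1 \<in> {0..1}" "x2 \<in> {0..1}" "x3 \<in> {0..1}"
  shows "(x1 + x2 + x3 - 2 \<ge> 0 \<longrightarrow>
           coherent (familyF E1 E2 E3 H1 H2 H3 x1 x2 x3) (assessM x1 x2 x3))
       \<and> (x1 + x2 - 1 > 0 \<and> x1 + x3 - 1 > 0 \<and> x2 + x3 - 1 > 0 \<and> x1 + x2 + x3 - 2 < 0 \<longrightarrow>
           \<not> coherent (familyF E1 E2 E3 H1 H2 H3 x1 x2 x3) (assessM x1 x2 x3))"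
proof (intro conjI impI)
  have len: "length (assessM x1 x2 x3) = length (familyF E1 E2 E3 H1 H2 H3 x1 x2 x3)"
    by (simp add: assessM_def familyF_def)
  define G where "G = (\<lambda>(s::nat\<Rightarrow>real) w. s 0 * gk (cond_event E1 H1) x1 w + s 1 * gk (cond_event E2 H2) x2 w + s 2 * gk (cond_event E3 H3) x3 w
     + s 3 * gk (conj2 E1 H1 E2 H2 x1 x2) (TL2 x1 x2) w
     + s 4 * gk (conj2 E1 H1 E3 H3 x1 x3) (TL2 x1 x3) w
     + s 5 * gk (conj2 E2 H2 E3 H3 x2 x3) (TL2 x2 x3) w
     + s 6 * gk (conj3 E1 H1 E2 H2 E3 H3 x1 x2 x3 (TL2 x1 x2) (TL2 x1 x3) (TL2 x2 x3)) (TL3 x1 x2 x3) w)"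
  have coh: "coherent (familyF E1 E2 E3 H1 H2 H3 x1 x2 x3) (assessM x1 x2 x3) \<longleftrightarrow>
     (\<forall>s. (\<exists>w\<in>H1 \<union> H2 \<union> H3. G s w \<le> 0) \<and> (\<exists>w\<in>H1 \<union> H2 \<union> H3. 0 \<le> G s w))"
    unfolding coherent_def Let_def G_expand U_eq G_def using len by simp
  {
    assume h: "x1 + x2 - 1 > 0 \<and> x1 + x3 - 1 > 0 \<and> x2 + x3 - 1 > 0 \<and> x1 + x2 + x3 - 2 < 0"
    define s :: "nat \<Rightarrow> real" where "s = (\<lambda>k. [-1,-1,-1,1,1,1,-1] ! k)"
    have t: "TL2 x1 x2 = x1+x2-1" "TL2 x1 x3 = x1+x3-1" "TL2 x2 x3 = x2+x3-1" "TL3 x1 x2 x3 = 0"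
      using h by (auto simp: TL2_def TL3_def)
    have pos: "G s w > 0" if "w \<in> H1 \<union> H2 \<union> H3" for w
      using Zpos[OF that assms(5-7), of E1 E2 E3] h unfolding G_def t s_def by simp
    show "\<not> coherent (familyF E1 E2 E3 H1 H2 H3 x1 x2 x3) (assessM x1 x2 x3)"
    proof
      assume "coherent (familyF E1 E2 E3 H1 H2 H3 x1 x2 x3) (assessM x1 x2 x3)"
      hence "\<exists>w\<in>H1 \<union> H2 \<union> H3. G s w \<le> 0" using coh by blast
      then obtain w where "w \<in> H1 \<union> H2 \<union> H3" "G s w \<le> 0" by blast
      thus False using pos by fastforce
    qed
  }
  {
    assume h: "x1 + x2 + x3 - 2 \<ge> 0"
    have t: "TL2 x1 x2 = x1+x2-1" "TL2 x1 x3 = x1+x3-1" "TL2 x2 x3 = x2+x3-1" "TL3 x1 x2 x3 = x1+x2+x3-2"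
      using h assms(5-7) by (auto simp: TL2_def TL3_def)
    have li: "\<forall>b :: nat \<Rightarrow> bool. \<exists>w. \<forall>i < length [E1, E2, E3, H1, H2, H3]. (w \<in> [E1, E2, E3, H1, H2, H3] ! i) = b i"
      using assms(1) unfolding logically_independent_def by blast
    have wit: "\<exists>w. (w\<in>E1) = b 0 \<and> (w\<in>E2) = b 1 \<and> (w\<in>E3) = b 2 \<and> w\<in>H1 \<and> w\<in>H2 \<and> w\<in>H3"
      for b :: "nat \<Rightarrow> bool"
    proof -
      obtain w where w: "\<forall>i < length [E1, E2, E3, H1, H2, H3]. (w \<in> [E1, E2, E3, H1, H2, H3] ! i) = (if i < 3 then b i else True)"
        using spec[OF li, of "\<lambda>i. if i < 3 then b i else True"] by blast
      have "(w\<in>E1) = b 0" "(w\<in>E2) = b 1" "(w\<in>E3) = b 2" "w\<in>H1" "w\<in>H2" "w\<in>H3"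
        using w[rule_format, of 0] w[rule_format, of 1] w[rule_format, of 2]
          w[rule_format, of 3] w[rule_format, of 4] w[rule_format, of 5] by simp_all
      thus ?thesis by blast
    qed
    obtain w0 where w0: "w0\<in>E1" "w0\<in>E2" "w0\<in>E3" "w0\<in>H1" "w0\<in>H2" "w0\<in>H3"
      using wit[of "\<lambda>i. True"] by blast
    obtain w1 where w1: "w1\<notin>E1" "w1\<in>E2" "w1\<in>E3" "w1\<in>H1" "w1\<in>H2" "w1\<in>H3"
      using wit[of "\<lambda>i. i\<noteq>0"] by auto
    obtain w2 where w2: "w2\<in>E1" "w2\<notin>E2" "w2\<in>E3" "w2\<in>H1" "w2\<in>H2" "w2\<in>H3"
      using wit[of "\<lambda>i. i\<noteq>1"] by auto
    obtain w3 where w3: "w3\<in>E1" "w3\<in>E2" "w3\<notin>E3" "w3\<in>H1" "w3\<in>H2" "w3\<in>H3"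
      using wit[of "\<lambda>i. i\<noteq>2"] by auto
    show "coherent (familyF E1 E2 E3 H1 H2 H3 x1 x2 x3) (assessM x1 x2 x3)"
      unfolding coh
    proof
      fix s
      have eq: "(x1+x2+x3-2) * G s w0 + (1-x1) * G s w1 + (1-x2) * G s w2 + (1-x3) * G s w3 = 0"
        unfolding G_def t using w0 w1 w2 w3
        by (simp add: gk_def cond_event_def conj2_def conj3_def algebra_simps)
      have p: "x1+x2+x3-2 \<ge> 0" "1-x1 \<ge> 0" "1-x2\<ge>0" "1-x3\<ge>0" "(x1+x2+x3-2)+(1-x1)+(1-x2)+(1-x3) = 1"
        using h assms(5-7) by auto
      have U: "w0 \<in> H1 \<union> H2 \<union> H3" "w1 \<in> H1 \<union> H2 \<union> H3" "w2 \<in> H1 \<union> H2 \<union> H3" "w3 \<in> H1 \<union> H2 \<union> H3"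
        using w0 w1 w2 w3 by auto
      show "(\<exists>w\<in>H1 \<union> H2 \<union> H3. G s w \<le> 0) \<and> (\<exists>w\<in>H1 \<union> H2 \<union> H3. 0 \<le> G s w)"
        using conv4[OF p eq] conv4'[OF p eq] U by blast
    qed
  }
qed

end
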